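(* Let $\Theta$ be a set of trajectory parameters, and for each iteration $j\ge 1$ let $g^j$ be a learned residual dynamics and $\theta^j\in\Theta$ the parameter returned by Bayesian optimization at iteration $j$. Suppose: (i) $\|g^j-g^*\|_\infty\le\epsilon^j$ with $\epsilon^j\to0$ as $j\to\infty$; and (ii) for each $j$, $J_{g^j}(\theta^j)\le\min_{\theta\in\Theta}J_{g^j}(\theta)+\delta(N_{BO})$, where $\delta(N_{BO})$ is a finite suboptimality bound depending on the number $N_{BO}$ of Bayesian optimization evaluations. Suppose moreover that, for every $j$ and every $\theta\in\Theta$, $|J_{g^j}(\theta)-J_{g^*}(\theta)|\le C^j\epsilon^j$ with constants $C^j>0$ that are bounded in $j$. Then, with $J^*=\min_{\theta\in\Theta}J_{g^*}(\theta)$, \[ \limsup_{j\to\infty}J_{g^*}(\theta^j)\le J^*+\delta(N_{BO}). \]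
   Context: $g^*$ denotes the true residual vehicle dynamics (the discrepancy between the true dynamics and a known nominal vehicle model), and $g^j$ the residual dynamics learned at iteration $j$ of an iterative learning scheme. For a residual $g$ and a trajectory parameter $\theta\in\Theta$, $J_g(\theta)$ is the lap time obtained by tracking the trajectory encoded by $\theta$ with a feedback controller in a closed-loop simulation of the vehicle under the nominal dynamics plus residual $g$; thus $J_{g^*}(\theta)$ is the true lap time and $J_{g^j}(\theta)$ the lap time evaluated under the learned model. The minima over $\Theta$ are assumed to exist. The uniform bound $|J_{g^j}-J_{g^*}|\le C^j\epsilon^j$ is the paper's Proposition 1, invoked in the statement of this theorem. *)

theory Defs
  imports "HOL-Analysis.Analysis"
begin

end

theory Submission
  imports Defs
begin

theorem theorem1:
  fixes J :: "('x \<Rightarrow> 'v::real_normed_vector) \<Rightarrow> 'p \<Rightarrow> real"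
    and Theta :: "'p set"
    and g :: "nat \<Rightarrow> 'x \<Rightarrow> 'v" and gstar :: "'x \<Rightarrow> 'v"
    and theta :: "nat \<Rightarrow> 'p"
    and eps C :: "nat \<Rightarrow> real"
    and delta :: "nat \<Rightarrow> real" and N_BO :: nat
  assumes min_star: "\<exists>t0\<in>Theta. \<forall>t\<in>Theta. J gstar t0 \<le> J gstar t"
    and min_j: "\<forall>j\<ge>1. \<exists>t0\<in>Theta. \<forall>t\<in>Theta. J (g j) t0 \<le> J (g j) t"
    and theta_in: "\<forall>j\<ge>1. theta j \<in> Theta"
    and sup_err: "\<forall>j\<ge>1. \<forall>x. norm (g j x - gstar x) \<le> eps j"
    and eps_lim: "eps \<longlonglongrightarrow> 0"
    and bo: "\<forall>j\<ge>1. J (g j) (theta j) \<le> (INF t\<in>Theta. J (g j) t) + delta N_BO"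
    and prop1: "\<forall>j\<ge>1. \<forall>t\<in>Theta. \<bar>J (g j) t - J gstar t\<bar> \<le> C j * eps j"
    and C_pos: "\<forall>j\<ge>1. C j > 0"
    and C_bdd: "\<exists>B. \<forall>j\<ge>1. C j \<le> B"
  shows "limsup (\<lambda>j. ereal (J gstar (theta j)))
           \<le> ereal ((INF t\<in>Theta. J gstar t) + delta N_BO)"
proof -
  obtain t0 where t0: "t0 \<in> Theta" "\<forall>t\<in>Theta. J gstar t0 \<le> J gstar t" using min_star by blast
  obtain B where B: "\<forall>j\<ge>1. C j \<le> B" using C_bdd by blast
  define K where "K = (INF t\<in>Theta. J gstar t) + delta N_BO"
  have Istar: "(INF t\<in>Theta. J gstar t) = J gstar t0"
  proof (rule antisym)
    show "(INF t\<in>Theta. J gstar t) \<le> J gstar t0"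
      by (rule cINF_lower[OF _ t0(1)]) (use t0 in \<open>auto intro: bdd_belowI2\<close>)
    show "J gstar t0 \<le> (INF t\<in>Theta. J gstar t)"
      by (rule cINF_greatest) (use t0 in auto)
  qed
  have ev: "eventually (\<lambda>j. ereal (J gstar (theta j)) \<le> ereal (K + 2 * B * eps j)) sequentially"
    using eventually_ge_at_top[of 1]
  proof eventually_elim
    case (elim j)
    then have e0: "eps j \<ge> 0" using sup_err norm_ge_zero order_trans by blast
    have bdd: "bdd_below ((\<lambda>t. J (g j) t) ` Theta)"
      using min_j elim by (meson bdd_belowI2)
    have "(INF t\<in>Theta. J (g j) t) \<le> J (g j) t0" by (rule cINF_lower[OF bdd t0(1)])
    moreover have "\<bar>J (g j) (theta j) - J gstar (theta j)\<bar> \<le> C j * eps j" using prop1 theta_in elim by blast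
    moreover have "\<bar>J (g j) t0 - J gstar t0\<bar> \<le> C j * eps j" using prop1 t0 elim by blast
    moreover have "C j * eps j \<le> B * eps j" using B elim e0 mult_right_mono by blast
    ultimately show ?case using bo elim unfolding K_def Istar by auto
  qed
  have lim: "(\<lambda>j. ereal (K + 2 * B * eps j)) \<longlonglongrightarrow> ereal K"
    using eps_lim by (intro tendsto_intros) (auto intro!: tendsto_eq_intros)
  have "limsup (\<lambda>j. ereal (J gstar (theta j))) \<le> limsup (\<lambda>j. ereal (K + 2 * B * eps j))"
    by (rule Limsup_mono[OF ev])
  also have "\<dots> = ereal K" using lim by (simp add: lim_imp_Limsup)
  finally show ?thesis unfolding K_def .
qed

end
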